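(* Suppose $G_{\text{hon}}$ is connected and let $\beta>1$, $A_j=\lceil j^\beta\rceil$. With $h_\dagger=(8\beta\bar d_{\text{hon}}/\Upsilon)\log(8\beta\bar d_{\text{hon}}n/\Upsilon)$, $$\mathbb E[A_{2\bar\tau_{\text{spr}}}]\le(2e)^{2\beta}n^\beta\Big(h_\dagger^\beta+\frac1{\beta-1}\Big),$$ so in particular $\mathbb E[A_{2\bar\tau_{\text{spr}}}]=\tilde O\big((n\bar d_{\text{hon}}/\Upsilon)^\beta\big)$.
   Context: $G=([n+m],E)$ undirected, honest agents $[n]$; for $i\in[n]$, $N_{\text{hon}}(i)$ honest neighbors, $d_{\text{hon}}(i)=|N_{\text{hon}}(i)|$, $d(i)$ total degree, $\bar d_{\text{hon}}=\max_i d_{\text{hon}}(i)$; $G_{\text{hon}}$ the honest subgraph; $\Upsilon=\min_{i\in[n]}d_{\text{hon}}(i)/d(i)$; $i^\star\in[n]$ fixed. Noisy rumor process: independent $\bar Y_j^{(i)}\sim$Bernoulli$(\Upsilon)$, $\bar H_j^{(i)}\sim$Uniform$(N_{\text{hon}}(i))$; $\bar{\mathcal I}_0=\{i^\star\}$, $\bar{\mathcal I}_j=\bar{\mathcal I}_{j-1}\cup\{i\notin\bar{\mathcal I}_{j-1}:\bar Y_j^{(i)}=1,\bar H_j^{(i)}\in\bar{\mathcal I}_{j-1}\}$; $\bar\tau_{\text{spr}}=\inf\{j\in\mathbb N:\bar{\mathcal I}_j=[n]\}$. *)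

theory Defs
  imports "HOL-Probability.Probability"
begin

text \<open>Vertices are natural numbers; the graph G lives on [n+m] = {1..n+m},
honest agents are [n] = {1..n}. The graph is given by an edge predicate E.\<close>

definition undirected_graph :: "nat set \<Rightarrow> (nat \<Rightarrow> nat \<Rightarrow> bool) \<Rightarrow> bool" where
  "undirected_graph V E \<longleftrightarrow> (\<forall>x y. E x y \<longrightarrow> x \<in> V \<and> y \<in> V \<and> x \<noteq> y \<and> E y x)"

definition hon_nbrs :: "nat \<Rightarrow> (nat \<Rightarrow> nat \<Rightarrow> bool) \<Rightarrow> nat \<Rightarrow> nat set" where
  "hon_nbrs n E i = {k \<in> {1..n}. E i k}"

definition dhon :: "nat \<Rightarrow> (nat \<Rightarrow> nat \<Rightarrow> bool) \<Rightarrow> nat \<Rightarrow> nat" where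
  "dhon n E i = card (hon_nbrs n E i)"

definition deg :: "nat \<Rightarrow> nat \<Rightarrow> (nat \<Rightarrow> nat \<Rightarrow> bool) \<Rightarrow> nat \<Rightarrow> nat" where
  "deg n m E i = card {k \<in> {1..n+m}. E i k}"

definition dhon_max :: "nat \<Rightarrow> (nat \<Rightarrow> nat \<Rightarrow> bool) \<Rightarrow> nat" where
  "dhon_max n E = Max (dhon n E ` {1..n})"

definition Upsilon :: "nat \<Rightarrow> nat \<Rightarrow> (nat \<Rightarrow> nat \<Rightarrow> bool) \<Rightarrow> real" where
  "Upsilon n m E = Min ((\<lambda>i. real (dhon n E i) / real (deg n m E i)) ` {1..n})"

definition hon_connected :: "nat \<Rightarrow> (nat \<Rightarrow> nat \<Rightarrow> bool) \<Rightarrow> bool" where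
  "hon_connected n E \<longleftrightarrow>
     (\<forall>i\<in>{1..n}. \<forall>k\<in>{1..n}. (\<lambda>x y. E x y \<and> x \<in> {1..n} \<and> y \<in> {1..n})\<^sup>*\<^sup>* i k)"

text \<open>One round j: for each honest i independently, the pair (Y_j^(i), H_j^(i)) with
 Y ~ Bernoulli(Upsilon), H ~ Uniform(N_hon(i)), independent.\<close>
definition round_pmf :: "nat \<Rightarrow> (nat \<Rightarrow> nat \<Rightarrow> bool) \<Rightarrow> real \<Rightarrow> (nat \<Rightarrow> bool \<times> nat) pmf" where
  "round_pmf n E p = Pi_pmf {1..n} (False, 0)
      (\<lambda>i. pair_pmf (bernoulli_pmf p) (pmf_of_set (hon_nbrs n E i)))"

text \<open>Whole noisy process: rounds indexed by j (round 0 is unused), all independent.\<close>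
definition noisy_space :: "nat \<Rightarrow> nat \<Rightarrow> (nat \<Rightarrow> nat \<Rightarrow> bool) \<Rightarrow> (nat \<Rightarrow> nat \<Rightarrow> bool \<times> nat) measure" where
  "noisy_space n m E = PiM UNIV (\<lambda>j::nat. measure_pmf (round_pmf n E (Upsilon n m E)))"

primrec infected :: "nat \<Rightarrow> nat \<Rightarrow> (nat \<Rightarrow> nat \<Rightarrow> bool \<times> nat) \<Rightarrow> nat \<Rightarrow> nat set" where
  "infected n istar \<omega> 0 = {istar}"
| "infected n istar \<omega> (Suc j) = infected n istar \<omega> j \<union>
     {i \<in> {1..n}. i \<notin> infected n istar \<omega> j \<and> fst (\<omega> (Suc j) i)
                 \<and> snd (\<omega> (Suc j) i) \<in> infected n istar \<omega> j}"

definition tau_spr :: "nat \<Rightarrow> nat \<Rightarrow> (nat \<Rightarrow> nat \<Rightarrow> bool \<times> nat) \<Rightarrow> enat" where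
  "tau_spr n istar \<omega> =
     (if \<exists>j. infected n istar \<omega> j = {1..n}
      then enat (LEAST j. infected n istar \<omega> j = {1..n}) else \<infinity>)"

definition A_seq :: "real \<Rightarrow> enat \<Rightarrow> ennreal" where
  "A_seq \<beta> x = (case x of enat j \<Rightarrow> ennreal (real_of_int \<lceil>real j powr \<beta>\<rceil>) | \<infinity> \<Rightarrow> \<infinity>)"

end

theory Submission
  imports Defs "HOL-Library.Transitive_Closure_Table"
begin


lemma infected_mono_Suc: "infected n istar \<omega> j \<subseteq> infected n istar \<omega> (Suc j)"
  by auto

lemma infected_mono: "j \<le> j' \<Longrightarrow> infected n istar \<omega> j \<subseteq> infected n istar \<omega> j'"
  by (induction j' rule: dec_induct) (auto intro: infected_mono_Suc[THEN subsetD])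

lemma infected_sub: "istar \<in> {1..n} \<Longrightarrow> infected n istar \<omega> j \<subseteq> {1..n}"
  by (induction j) auto

lemma infect_step:
  assumes "x \<in> infected n istar \<omega> t" "j \<in> {t+1..t+b}" "fst (\<omega> j z)" "snd (\<omega> j z) = x" "z \<in> {1..n}"
  shows "z \<in> infected n istar \<omega> (t + b)"
proof -
  obtain j' where j': "j = Suc j'" "t \<le> j'" "Suc j' \<le> t + b" using assms(2) by (cases j) auto
  have "x \<in> infected n istar \<omega> j'" using infected_mono[OF j'(2)] assms(1) by blast
  hence "z \<in> infected n istar \<omega> (Suc j')" using assms j' by auto
  thus ?thesis using infected_mono[OF j'(3)] by blast
qed

lemma path_infect:
  assumes "rtrancl_path R x xs y" "\<And>a c. R a c \<Longrightarrow> c \<in> {1..n}"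
  shows "x \<in> infected n istar \<omega> t \<Longrightarrow>
    (\<forall>k<length xs. \<exists>j\<in>{t+k*b+1..t+k*b+b}. fst (\<omega> j (xs!k)) \<and> snd (\<omega> j (xs!k)) = (x#xs)!k)
    \<Longrightarrow> y \<in> infected n istar \<omega> (t + length xs * b)"
  using assms(1)
proof (induction x xs y arbitrary: t rule: rtrancl_path.induct)
  case (base x)
  then show ?case by simp
next
  case (step x z zs y)
  from step.prems(2)[rule_format, of 0] obtain j where j: "j\<in>{t+1..t+b}" "fst (\<omega> j z)" "snd (\<omega> j z) = x"
    by auto
  have z: "z \<in> infected n istar \<omega> (t+b)"
    by (rule infect_step[OF step.prems(1) j]) (use assms(2) step.hyps(1) in auto)
  have "y \<in> infected n istar \<omega> (t + b + length zs * b)"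
  proof (rule step.IH[OF z], intro allI impI)
    fix k assume "k < length zs"
    from step.prems(2)[rule_format, of "Suc k"] this
    show "\<exists>j\<in>{t + b + k * b + 1..t + b + k * b + b}. fst (\<omega> j (zs ! k)) \<and> snd (\<omega> j (zs ! k)) = (z # zs) ! k"
      by (auto simp: algebra_simps)
  qed
  thus ?case by (simp add: algebra_simps)
qed

lemma tau_le: "infected n istar \<omega> t = {1..n} \<Longrightarrow> tau_spr n istar \<omega> \<le> enat t"
  unfolding tau_spr_def by (auto intro: Least_le)



lemma finite_hon_nbrs: "finite (hon_nbrs n E u)" unfolding hon_nbrs_def by auto

lemma round_success:
  assumes "p \<in> hon_nbrs n E u" "u \<in> {1..n}" "0 \<le> r" "r \<le> 1"
  shows "measure_pmf.prob (round_pmf n E r) {f. fst (f u) \<and> snd (f u) = p}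
       = r / card (hon_nbrs n E u)"
proof -
  have "{f. fst (f u) \<and> snd (f u) = p} = (\<lambda>f. f u) -` {(True, p)}" by (auto simp: prod_eq_iff)
  hence "measure_pmf.prob (round_pmf n E r) {f. fst (f u) \<and> snd (f u) = p}
      = measure_pmf.prob (map_pmf (\<lambda>f. f u) (round_pmf n E r)) {(True, p)}"
    by (simp add: measure_map_pmf)
  also have "map_pmf (\<lambda>f. f u) (round_pmf n E r) = pair_pmf (bernoulli_pmf r) (pmf_of_set (hon_nbrs n E u))"
    unfolding round_pmf_def using assms by (subst Pi_pmf_component) auto
  also have "measure_pmf.prob \<dots> {(True, p)} = r / card (hon_nbrs n E u)"
  proof -
    have ne: "hon_nbrs n E u \<noteq> {}" using assms by auto
    show ?thesis using assms
      by (subst measure_pmf_single) (simp add: pmf_pair pmf_of_set[OF ne finite_hon_nbrs])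
  qed
  finally show ?thesis .
qed

lemma round_fail:
  assumes "p \<in> hon_nbrs n E u" "u \<in> {1..n}" "0 \<le> r" "r \<le> 1"
  shows "emeasure (measure_pmf (round_pmf n E r)) {f. \<not> (fst (f u) \<and> snd (f u) = p)}
       = ennreal (1 - r / card (hon_nbrs n E u))"
proof -
  have "{f. \<not> (fst (f u) \<and> snd (f u) = p)} = UNIV - {f. fst (f u) \<and> snd (f u) = p}" by auto
  hence "measure_pmf.prob (round_pmf n E r) {f. \<not> (fst (f u) \<and> snd (f u) = p)} = 1 - r / card (hon_nbrs n E u)"
    using round_success[OF assms] measure_pmf.prob_compl[of "{f. fst (f u) \<and> snd (f u) = p}" "round_pmf n E r"]
    by simp
  thus ?thesis by (simp add: measure_pmf.emeasure_eq_measure)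
qed

definition failset :: "nat \<Rightarrow> nat \<Rightarrow> nat \<Rightarrow> nat \<Rightarrow> (nat \<Rightarrow> nat \<Rightarrow> bool \<times> nat) set" where
  "failset u p t b = {\<omega>. \<forall>j\<in>{t+1..t+b}. \<not> (fst (\<omega> j u) \<and> snd (\<omega> j u) = p)}"

lemma space_noisy: "space (noisy_space n m E) = UNIV"
  unfolding noisy_space_def by (simp add: space_PiM)

lemma prob_noisy: "prob_space (noisy_space n m E)"
  unfolding noisy_space_def by (rule prob_space_PiM) (simp add: prob_space_measure_pmf)

lemma failset_emb: "failset u p t b = prod_emb UNIV (\<lambda>j. measure_pmf (round_pmf n E r)) {t+1..t+b}
     (Pi\<^sub>E {t+1..t+b} (\<lambda>_. {f. \<not> (fst (f u) \<and> snd (f u) = p)}))"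
  unfolding failset_def by (rule set_eqI) (simp add: prod_emb_iff PiE_iff)

lemma failset_sets: "failset u p t b \<in> sets (noisy_space n m E)"
  unfolding noisy_space_def
  by (subst failset_emb[where n=n and E=E and r="Upsilon n m E"], rule sets_PiM_I) auto

lemma failset_emeasure:
  assumes "p \<in> hon_nbrs n E u" "u \<in> {1..n}" "0 \<le> Upsilon n m E" "Upsilon n m E \<le> 1"
  shows "emeasure (noisy_space n m E) (failset u p t b) = ennreal ((1 - Upsilon n m E / card (hon_nbrs n E u)) ^ b)"
proof -
  have "emeasure (noisy_space n m E) (failset u p t b)
     = (\<Prod>j\<in>{t+1..t+b}. emeasure (measure_pmf (round_pmf n E (Upsilon n m E))) {f. \<not> (fst (f u) \<and> snd (f u) = p)})"
    unfolding noisy_space_def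
    by (subst failset_emb[where n=n and E=E and r="Upsilon n m E"], rule emeasure_PiM_emb)
       (auto simp: prob_space_measure_pmf)
  also have "\<dots> = ennreal ((1 - Upsilon n m E / card (hon_nbrs n E u)) ^ b)"
  proof -
    have "card (hon_nbrs n E u) \<ge> 1" using assms finite_hon_nbrs[of n E u]
      by (metis card_0_eq empty_iff less_one linorder_not_le)
    hence "Upsilon n m E / card (hon_nbrs n E u) \<le> 1" using assms by (simp add: divide_le_eq_1)
    thus ?thesis using round_fail[OF assms] by (simp add: ennreal_power)
  qed
  finally show ?thesis .
qed



lemma rtrancl_path_nth:
  "rtrancl_path r x xs y \<Longrightarrow> k < length xs \<Longrightarrow> r ((x#xs)!k) (xs!k)"
proof (induction x xs y arbitrary: k rule: rtrancl_path.induct)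
  case (base x) thus ?case by simp
next
  case (step x z zs y)
  thus ?case by (cases k) auto
qed

locale graphctx =
  fixes n m istar :: nat and E :: "nat \<Rightarrow> nat \<Rightarrow> bool"
  assumes und: "undirected_graph {1..n+m} E"
    and conn: "hon_connected n E"
    and ist: "istar \<in> {1..n}"
    and n2: "n \<ge> 2"
begin

definition R where "R = (\<lambda>x y. E x y \<and> x \<in> {1..n} \<and> y \<in> {1..n})"

lemma R_sym: "R a c \<Longrightarrow> a \<in> hon_nbrs n E c \<and> c \<in> {1..n}"
  using und unfolding R_def undirected_graph_def hon_nbrs_def by auto

lemma nbr_ne: assumes "u \<in> {1..n}" shows "hon_nbrs n E u \<noteq> {}"
proof -
  obtain k where k: "k \<in> {1..n}" "k \<noteq> u"
  proof (cases "u = 1")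
    case True thus ?thesis using n2 by (intro that[of 2]) auto
  next
    case False thus ?thesis using n2 by (intro that[of 1]) auto
  qed
  have "R\<^sup>*\<^sup>* u k" using conn assms k unfolding hon_connected_def R_def by auto
  then obtain w where "R u w" using k(2) by (cases rule: converse_rtranclpE) auto
  thus ?thesis using R_sym[of u w] und unfolding R_def undirected_graph_def hon_nbrs_def by auto
qed

lemma dhon_pos: "u \<in> {1..n} \<Longrightarrow> dhon n E u \<ge> 1"
  using nbr_ne[of u] finite_hon_nbrs[of n E u] unfolding dhon_def
  by (metis One_nat_def Suc_leI card_gt_0_iff)

lemma dhon_le_deg: "dhon n E u \<le> deg n m E u"
  unfolding dhon_def deg_def hon_nbrs_def by (rule card_mono) auto

lemma dhon_le_max: "u \<in> {1..n} \<Longrightarrow> dhon n E u \<le> dhon_max n E"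
  unfolding dhon_max_def by (rule Max_ge) auto

lemma dmax_pos: "dhon_max n E \<ge> 1"
  using dhon_le_max[of 1] dhon_pos[of 1] n2 by auto

lemma ups_pos: "Upsilon n m E > 0"
  unfolding Upsilon_def
proof (subst Min_gr_iff)
  show "\<forall>a\<in>(\<lambda>i. real (dhon n E i) / real (deg n m E i)) ` {1..n}. 0 < a"
  proof
    fix a assume "a \<in> (\<lambda>i. real (dhon n E i) / real (deg n m E i)) ` {1..n}"
    then obtain i where i: "i \<in> {1..n}" "a = real (dhon n E i) / real (deg n m E i)" by auto
    have "dhon n E i \<ge> 1" using dhon_pos[OF i(1)] .
    moreover have "deg n m E i \<ge> 1" using dhon_le_deg[of i] calculation by linarith
    ultimately show "0 < a" using i(2) by simp
  qed
qed (use n2 in auto)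

lemma ups_le1: "Upsilon n m E \<le> 1"
proof -
  have "Upsilon n m E \<le> real (dhon n E 1) / real (deg n m E 1)"
    unfolding Upsilon_def by (rule Min_le) (use n2 in auto)
  also have "\<dots> \<le> 1" using dhon_le_deg[of 1] by (cases "deg n m E 1 = 0") (auto simp: divide_le_eq_1)
  finally show ?thesis .
qed

definition q where "q = Upsilon n m E / dhon_max n E"

lemma q_pos: "q > 0" and q_le1: "q \<le> 1"
  using ups_pos ups_le1 dmax_pos unfolding q_def by (auto simp: divide_le_eq_1)

lemma path_ex: assumes "v \<in> {1..n}"
  shows "\<exists>xs. rtrancl_path R istar xs v \<and> distinct (istar#xs) \<and> set xs \<subseteq> {1..n}"
proof -
  have "R\<^sup>*\<^sup>* istar v" using conn assms ist unfolding hon_connected_def R_def by auto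
  then obtain xs where "rtrancl_path R istar xs v" by (auto simp: rtranclp_eq_rtrancl_path)
  then obtain xs' where xs': "rtrancl_path R istar xs' v" "distinct (istar#xs')" by (rule rtrancl_path_distinct)
  have "set xs' \<subseteq> {1..n}"
  proof
    fix a assume "a \<in> set xs'"
    then obtain k where "k < length xs'" "a = xs'!k" by (auto simp: in_set_conv_nth)
    thus "a \<in> {1..n}" using rtrancl_path_nth[OF xs'(1)] R_sym by blast
  qed
  thus ?thesis using xs' by blast
qed

definition P where "P v = (SOME xs. rtrancl_path R istar xs v \<and> distinct (istar#xs) \<and> set xs \<subseteq> {1..n})"

lemma P: "v \<in> {1..n} \<Longrightarrow> rtrancl_path R istar (P v) v \<and> distinct (istar#P v) \<and> set (P v) \<subseteq> {1..n}"
  unfolding P_def using path_ex by (rule someI_ex)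

lemma P_len: assumes "v \<in> {1..n}" shows "length (P v) \<le> n - 1"
proof -
  have "length (istar # P v) = card (set (istar # P v))" using P[OF assms] by (simp add: distinct_card)
  also have "\<dots> \<le> card {1..n}" using P[OF assms] ist by (intro card_mono) auto
  finally show ?thesis by simp
qed

definition S where "S b = (\<Union>v\<in>{1..n}. \<Union>k\<in>{..<length (P v)}. failset (P v ! k) ((istar # P v) ! k) (k*b) b)"

lemma S_sets: "S b \<in> sets (noisy_space n m E)"
  unfolding S_def by (intro sets.finite_UN) (auto simp: failset_sets)

lemma S_good: assumes "\<omega> \<notin> S b" shows "tau_spr n istar \<omega> \<le> enat ((n-1)*b)"
proof -
  have "v \<in> infected n istar \<omega> ((n-1)*b)" if v: "v \<in> {1..n}" for v
  proof -
    have "v \<in> infected n istar \<omega> (0 + length (P v) * b)"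
    proof (rule path_infect[where R=R])
      show "rtrancl_path R istar (P v) v" using P[OF v] by blast
      show "\<And>a c. R a c \<Longrightarrow> c \<in> {1..n}" using R_sym by blast
      show "istar \<in> infected n istar \<omega> 0" by simp
      show "\<forall>k<length (P v). \<exists>j\<in>{0 + k * b + 1..0 + k * b + b}. fst (\<omega> j (P v ! k)) \<and> snd (\<omega> j (P v ! k)) = (istar # P v) ! k"
        using assms v unfolding S_def failset_def by auto
    qed
    also have "\<dots> \<subseteq> infected n istar \<omega> ((n-1)*b)"
      using P_len[OF v] by (intro infected_mono) (simp add: mult_right_mono)
    finally show ?thesis .
  qed
  hence "infected n istar \<omega> ((n-1)*b) = {1..n}" using infected_sub[OF ist] by blast
  thus ?thesis by (rule tau_le)
qed

lemma fail_le: assumes v: "v \<in> {1..n}" and k: "k < length (P v)"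
  shows "emeasure (noisy_space n m E) (failset (P v ! k) ((istar # P v) ! k) t b) \<le> ennreal ((1 - q)^b)"
proof -
  have st: "(istar # P v) ! k \<in> hon_nbrs n E (P v ! k) \<and> P v ! k \<in> {1..n}"
    using R_sym rtrancl_path_nth[OF conjunct1[OF P[OF v]] k] by blast
  have "emeasure (noisy_space n m E) (failset (P v ! k) ((istar # P v) ! k) t b)
      = ennreal ((1 - Upsilon n m E / card (hon_nbrs n E (P v ! k))) ^ b)"
    using st ups_pos ups_le1 by (intro failset_emeasure) auto
  also have "\<dots> \<le> ennreal ((1 - q)^b)"
  proof (intro ennreal_leI power_mono)
    have c1: "real (card (hon_nbrs n E (P v ! k))) \<ge> 1" using dhon_pos[of "P v ! k"] st by (simp add: dhon_def)
    have c2: "real (card (hon_nbrs n E (P v ! k))) \<le> dhon_max n E" using dhon_le_max[of "P v ! k"] st by (simp add: dhon_def)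
    have "q \<le> Upsilon n m E / card (hon_nbrs n E (P v ! k))"
      unfolding q_def using c1 c2 ups_pos by (intro divide_left_mono) auto
    thus "1 - Upsilon n m E / real (card (hon_nbrs n E (P v ! k))) \<le> 1 - q" by simp
    show "0 \<le> 1 - Upsilon n m E / real (card (hon_nbrs n E (P v ! k)))"
      using c1 ups_le1 by (simp add: divide_le_eq_1)
  qed
  finally show ?thesis .
qed

lemma S_bound: "emeasure (noisy_space n m E) (S b) \<le> ennreal (real (n*(n-1)) * (1-q)^b)"
proof -
  have "emeasure (noisy_space n m E) (S b) \<le> (\<Sum>v\<in>{1..n}. emeasure (noisy_space n m E) (\<Union>k\<in>{..<length (P v)}. failset (P v ! k) ((istar # P v) ! k) (k*b) b))"
    unfolding S_def by (intro emeasure_subadditive_finite) (auto simp: failset_sets intro!: sets.finite_UN)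
  also have "\<dots> \<le> (\<Sum>v\<in>{1..n}. ennreal (real (n-1) * (1-q)^b))"
  proof (intro sum_mono)
    fix v assume v: "v \<in> {1..n}"
    have "emeasure (noisy_space n m E) (\<Union>k\<in>{..<length (P v)}. failset (P v ! k) ((istar # P v) ! k) (k*b) b)
       \<le> (\<Sum>k\<in>{..<length (P v)}. emeasure (noisy_space n m E) (failset (P v ! k) ((istar # P v) ! k) (k*b) b))"
      by (intro emeasure_subadditive_finite) (auto simp: failset_sets)
    also have "\<dots> \<le> (\<Sum>k\<in>{..<length (P v)}. ennreal ((1-q)^b))"
      using fail_le[OF v] by (intro sum_mono) auto
    also have "\<dots> = ennreal (real (length (P v)) * (1-q)^b)"
      using q_le1 by (simp add: ennreal_of_nat_eq_real_of_nat ennreal_mult)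
    also have "\<dots> \<le> ennreal (real (n-1) * (1-q)^b)"
      using P_len[OF v] q_le1 by (intro ennreal_leI mult_right_mono) auto
    finally show "emeasure (noisy_space n m E) (\<Union>k\<in>{..<length (P v)}. failset (P v ! k) ((istar # P v) ! k) (k*b) b)
       \<le> ennreal (real (n-1) * (1-q)^b)" .
  qed
  also have "\<dots> = of_nat n * ennreal (real (n-1) * (1-q)^b)" by (simp only: sum_constant card_atLeastAtMost) simp
  also have "\<dots> = ennreal (real n * (real (n-1) * (1-q)^b))"
    by (simp add: ennreal_of_nat_eq_real_of_nat ennreal_mult'[symmetric])
  also have "\<dots> = ennreal (real (n*(n-1)) * (1-q)^b)"
    by (simp only: of_nat_mult mult.assoc)
  finally show ?thesis .
qed

end


lemma A_le:
  assumes "tt \<le> enat t" "\<beta> > 0" "real (2*t) \<le> x"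
  shows "A_seq \<beta> (2*tt) \<le> ennreal (x powr \<beta> + 1)"
proof -
  obtain s0 where s: "tt = enat s0" "s0 \<le> t" using assms(1) by (cases tt) auto
  have "2 * tt = enat (2 * s0)" using s by (simp add: numeral_eq_enat)
  hence "A_seq \<beta> (2*tt) = ennreal (real_of_int \<lceil>real (2 * s0) powr \<beta>\<rceil>)" by (simp add: A_seq_def)
  also have "\<dots> \<le> ennreal (x powr \<beta> + 1)"
  proof (rule ennreal_leI)
    have "real (2 * s0) powr \<beta> \<le> x powr \<beta>"
      using s assms by (intro powr_mono2) auto
    thus "real_of_int \<lceil>real (2 * s0) powr \<beta>\<rceil> \<le> x powr \<beta> + 1" by linarith
  qed
  finally show ?thesis .
qed

lemma one_minus_le_exp: "(1 - q::real)^j \<le> exp (-q * j)" if "q \<le> 1" for q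
proof -
  have "(1-q)^j \<le> exp (-q)^j" using that by (intro power_mono) (auto simp: exp_ge_add_one_self[of "-q", simplified])
  thus ?thesis by (simp add: exp_of_nat_mult[symmetric] mult.commute)
qed

lemma powr_shift:
  assumes "q > 0" "\<beta> > 0" "2*\<beta>/q \<le> real b0 + 1"
  shows "(real k + real b0 + 1) powr \<beta> \<le> (real b0 + 1) powr \<beta> * exp (q * k / 2)"
proof -
  have B: "real b0 + 1 > 0" by simp
  have "real k + real b0 + 1 = (real b0 + 1) * (1 + k / (real b0 + 1))" using B by (simp add: field_simps)
  hence "(real k + real b0 + 1) powr \<beta> = (real b0 + 1) powr \<beta> * (1 + k / (real b0 + 1)) powr \<beta>"
    by (simp add: powr_mult)
  also have "(1 + k / (real b0 + 1)) powr \<beta> \<le> exp (k / (real b0 + 1)) powr \<beta>"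
    using assms by (intro powr_mono2) (auto simp: exp_ge_add_one_self)
  also have "\<dots> = exp (\<beta> * (k / (real b0 + 1)))" by (simp add: powr_def)
  also have "\<dots> \<le> exp (q * k / 2)"
  proof -
    have "\<beta> / (real b0 + 1) \<le> q/2" using assms B by (simp add: field_simps)
    hence "\<beta> / (real b0 + 1) * k \<le> q/2 * k" by (intro mult_right_mono) auto
    thus ?thesis by simp
  qed
  finally show ?thesis by (simp add: mult_left_mono)
qed

lemma term_bound:
  assumes "0 < q" "q \<le> 1" "\<beta> > 0" "N \<ge> 1" "c \<ge> 0" "2*\<beta>/q \<le> real b0 + 1"
  shows "((2*N*(real (k+b0)+1)) powr \<beta> + 1) * (c*(1-q)^(k+b0))
     \<le> 2*c*(2*N) powr \<beta> * (real b0+1) powr \<beta> * exp(-q*b0) * exp(-q/2)^k"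
proof -
  have "1*1 \<le> (2*N)*(real (k+b0)+1)" using assms by (intro mult_mono) auto
  hence g1: "(2*N*(real (k+b0)+1)) powr \<beta> \<ge> 1" using assms by (intro ge_one_powr_ge_zero) auto
  have "((2*N*(real (k+b0)+1)) powr \<beta> + 1) \<le> 2 * ((2*N) powr \<beta> * (real k + real b0 + 1) powr \<beta>)"
  proof -
    have "(2*N*(real (k+b0)+1)) powr \<beta> = (2*N) powr \<beta> * (real k + real b0 + 1) powr \<beta>"
      using assms by (subst powr_mult[symmetric]) (auto simp: algebra_simps)
    thus ?thesis using g1 by linarith
  qed
  also have "\<dots> \<le> 2 * ((2*N) powr \<beta> * ((real b0 + 1) powr \<beta> * exp (q * k / 2)))"
    using powr_shift[OF assms(1,3,6)] by (intro mult_left_mono) auto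
  finally have A: "((2*N*(real (k+b0)+1)) powr \<beta> + 1) \<le> 2 * ((2*N) powr \<beta> * ((real b0 + 1) powr \<beta> * exp (q * k / 2)))" .
  have B: "c*(1-q)^(k+b0) \<le> c * exp (-q * (k+b0))"
    using one_minus_le_exp[OF assms(2), of "k+b0"] assms by (intro mult_left_mono) auto
  have "((2*N*(real (k+b0)+1)) powr \<beta> + 1) * (c*(1-q)^(k+b0))
     \<le> 2 * ((2*N) powr \<beta> * ((real b0 + 1) powr \<beta> * exp (q * k / 2))) * (c * exp (-q * (k+b0)))"
    by (rule mult_mono[OF A B]) (use assms in auto)
  also have "\<dots> = 2*c*(2*N) powr \<beta> * (real b0+1) powr \<beta> * exp(-q*b0) * exp(-q/2)^k"
  proof -
    have "exp (q * k / 2) * exp (-q * (k+b0)) = exp(-q*b0) * exp(-q/2)^k"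
      by (simp add: exp_add[symmetric] exp_of_nat_mult[symmetric] algebra_simps)
    thus ?thesis by (simp add: algebra_simps)
  qed
  finally show ?thesis .
qed

lemma geo_inv: fixes q :: real assumes "0 < q" "q \<le> 1" shows "1 / (1 - exp (-q/2)) \<le> 3 / q"
proof -
  have e: "exp (q/2) \<ge> 1 + q/2" by (rule exp_ge_add_one_self)
  have "exp (-q/2) = 1 / exp (q/2)" by (simp add: exp_minus field_simps)
  also have "\<dots> \<le> 1 / (1 + q/2)" using e assms by (intro divide_left_mono) auto
  finally have "exp (-q/2) \<le> 1 / (1 + q/2)" .
  moreover have "1 - 1 / (1 + q/2) = (q/2) / (1 + q/2)" using assms by (simp add: field_simps)
  ultimately have "1 - exp (-q/2) \<ge> (q/2) / (1 + q/2)" by linarith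
  moreover have "(q/2)/(1+q/2) > 0" using assms by auto
  ultimately have "1 / (1 - exp (-q/2)) \<le> 1 / ((q/2)/(1+q/2))"
  proof -
    assume a1: "1 - exp (-q/2) \<ge> (q/2) / (1 + q/2)" and a2: "(q/2)/(1+q/2) > 0"
    have p1: "1 - exp (-q/2) > 0" using a1 a2 by linarith
    show ?thesis by (rule divide_left_mono[OF a1]) (use mult_pos_pos[OF p1 a2] in auto)
  qed
  also have "\<dots> = (2 + q)/q" using assms by (simp add: field_simps)
  also have "\<dots> \<le> 3/q" using assms by (intro divide_right_mono) auto
  finally show ?thesis .
qed



lemma expect_bound:
  fixes M :: "'a measure" and tt :: "'a \<Rightarrow> enat" and S :: "nat \<Rightarrow> 'a set" and N b0 :: nat
  assumes PS: "prob_space M" and Ssets: "\<And>b. S b \<in> sets M"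
    and Sb: "\<And>b. emeasure M (S b) \<le> ennreal (c*(1-q)^b)"
    and good: "\<And>b \<omega>. \<omega> \<in> space M \<Longrightarrow> \<omega> \<notin> S b \<Longrightarrow> tt \<omega> \<le> enat (N*b)"
    and q: "0<q" "q\<le>1" and bet: "\<beta>>1" and N: "N \<ge> 1" and c: "c > 0"
    and b0: "b0 = nat \<lceil>max (2*\<beta>/q) (ln (6*c/q)/q)\<rceil>"
  shows "(\<integral>\<^sup>+\<omega>. A_seq \<beta> (2*tt \<omega>) \<partial>M) \<le> ennreal (3 * (2*N*(real b0+1)) powr \<beta>)"
proof -
  interpret prob_space M by (rule PS)
  define g where "g k = (2*real N*(real(k+b0)+1)) powr \<beta> + 1" for k
  define C0 where "C0 = real (2*(N*b0)) powr \<beta> + 1"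
  define F where "F \<omega> = (\<Sum>k. ennreal (g k) * indicator (S (k+b0)) \<omega>)" for \<omega>
  have b0a: "2*\<beta>/q \<le> real b0 + 1" and b0b: "ln (6*c/q)/q \<le> real b0" unfolding b0 by linarith+
  have pw: "A_seq \<beta> (2*tt \<omega>) \<le> ennreal C0 + F \<omega>" if \<omega>: "\<omega> \<in> space M" for \<omega>
  proof (cases "\<exists>k. \<omega> \<notin> S (k+b0)")
    case True
    define k where "k = (LEAST k. \<omega> \<notin> S (k+b0))"
    have k: "\<omega> \<notin> S (k+b0)" unfolding k_def using True by (rule LeastI_ex)
    show ?thesis
    proof (cases k)
      case 0
      have "A_seq \<beta> (2*tt \<omega>) \<le> ennreal C0" unfolding C0_def
        using good[OF \<omega> k] 0 bet by (intro A_le) auto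
      thus ?thesis by (simp add: add_increasing2)
    next
      case (Suc k')
      have "\<omega> \<in> S (k'+b0)" using not_less_Least[of k' "\<lambda>k. \<omega> \<notin> S (k+b0)"] Suc unfolding k_def by auto
      have "A_seq \<beta> (2*tt \<omega>) \<le> ennreal (g k')" unfolding g_def
        using good[OF \<omega> k] Suc bet by (intro A_le) (auto simp: algebra_simps)
      also have "\<dots> = ennreal (g k') * indicator (S (k'+b0)) \<omega>" using \<open>\<omega> \<in> S (k'+b0)\<close> by simp
      also have "\<dots> = (\<Sum>k\<in>{k'}. ennreal (g k) * indicator (S (k+b0)) \<omega>)"
        by (simp only: sum.insert[OF finite.emptyI] empty_iff not_False_eq_True sum.empty add_0_right)
      also have "\<dots> \<le> F \<omega>" unfolding F_def
        by (rule sum_le_suminf) auto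
      finally show ?thesis by (simp add: add_increasing)
    qed
  next
    case False
    have "F \<omega> = top"
    proof (rule ccontr)
      assume "F \<omega> \<noteq> top"
      then obtain L where L: "F \<omega> < of_nat L" using ennreal_Ex_less_of_nat top.not_eq_extremum by blast
      have "of_nat L = (\<Sum>k<L. (1::ennreal))" by simp
      also have "\<dots> \<le> (\<Sum>k<L. ennreal (g k) * indicator (S (k+b0)) \<omega>)"
      proof (intro sum_mono)
        fix k
        have "1 \<le> g k" unfolding g_def by simp
        thus "1 \<le> ennreal (g k) * indicator (S (k+b0)) \<omega>" using False by auto
      qed
      also have "\<dots> \<le> F \<omega>" unfolding F_def by (rule sum_le_suminf) auto
      finally show False using L by simp
    qed
    thus ?thesis by simp
  qed
  have meas: "(\<lambda>x. ennreal (g k) * indicator (S (k+b0)) x) \<in> borel_measurable M" for k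
    using Ssets by measurable
  have "(\<integral>\<^sup>+\<omega>. A_seq \<beta> (2*tt \<omega>) \<partial>M) \<le> (\<integral>\<^sup>+\<omega>. ennreal C0 + F \<omega> \<partial>M)"
    using pw by (intro nn_integral_mono) auto
  also have "\<dots> = ennreal C0 + (\<integral>\<^sup>+\<omega>. F \<omega> \<partial>M)"
  proof -
    have "F \<in> borel_measurable M" unfolding F_def by (rule borel_measurable_suminf_order[OF meas])
    thus ?thesis by (subst nn_integral_add) (auto simp: emeasure_space_1)
  qed
  also have "(\<integral>\<^sup>+\<omega>. F \<omega> \<partial>M) = (\<Sum>k. ennreal (g k) * emeasure M (S (k+b0)))"
    unfolding F_def by (subst nn_integral_suminf[OF meas]) (simp add: nn_integral_cmult_indicator Ssets)
  also have "\<dots> \<le> (\<Sum>k. ennreal (2*c*(2*N) powr \<beta> * (real b0+1) powr \<beta> * exp(-q*b0) * exp(-q/2)^k))"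
  proof (intro suminf_le summableI)
    fix k
    have "ennreal (g k) * emeasure M (S (k+b0)) \<le> ennreal (g k) * ennreal (c*(1-q)^(k+b0))"
      by (intro mult_left_mono Sb) auto
    also have "\<dots> = ennreal (g k * (c*(1-q)^(k+b0)))"
      using q by (subst ennreal_mult') (auto simp: g_def)
    also have "\<dots> \<le> ennreal (2*c*(2*N) powr \<beta> * (real b0+1) powr \<beta> * exp(-q*b0) * exp(-q/2)^k)"
    proof -
      have tb: "((2*real N*(real (k+b0)+1)) powr \<beta> + 1) * (c*(1-q)^(k+b0))
     \<le> 2*c*(2*real N) powr \<beta> * (real b0+1) powr \<beta> * exp(-q*b0) * exp(-q/2)^k"
        by (rule term_bound[OF q]) (use bet N c b0a in auto)
      have r2: "real (2*N) = 2*real N" by simp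
      show ?thesis unfolding g_def r2 by (rule ennreal_leI[OF tb])
    qed
    finally show "ennreal (g k) * emeasure M (S (k+b0)) \<le> ennreal (2*c*(2*N) powr \<beta> * (real b0+1) powr \<beta> * exp(-q*b0) * exp(-q/2)^k)" .
  qed
  also have "\<dots> = ennreal (2*c*(2*N) powr \<beta> * (real b0+1) powr \<beta> * exp(-q*b0) / (1 - exp(-q/2)))"
  proof (rule suminf_ennreal_eq)
    show "0 \<le> 2*c*(2*N) powr \<beta> * (real b0+1) powr \<beta> * exp(-q*b0) * exp(-q/2)^k" for k using c by auto
    have s1: "norm (exp(-q/2)) < 1" using q by simp
    show "(\<lambda>k. 2*c*(2*N) powr \<beta> * (real b0+1) powr \<beta> * exp(-q*b0) * exp(-q/2)^k) sums
        (2*c*(2*N) powr \<beta> * (real b0+1) powr \<beta> * exp(-q*b0) / (1 - exp(-q/2)))"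
      using sums_mult[OF geometric_sums[OF s1], of "2*c*(2*N) powr \<beta> * (real b0+1) powr \<beta> * exp(-q*b0)"]
      by simp
  qed
  also have "\<dots> \<le> ennreal ((2*N) powr \<beta> * (real b0+1) powr \<beta>)"
  proof (rule ennreal_leI)
    have e: "exp(-q*b0) \<le> q/(6*c)"
    proof -
      have "ln (6*c/q) \<le> q * b0" using b0b q by (simp add: field_simps)
      hence "exp(-q*b0) \<le> exp (- ln (6*c/q))" by simp
      also have "\<dots> = q/(6*c)" using q c by (simp add: exp_minus)
      finally show ?thesis .
    qed
    have K0: "0 \<le> (2*N) powr \<beta> * (real b0+1) powr \<beta>" by simp
    have "2*c*(2*N) powr \<beta> * (real b0+1) powr \<beta> * exp(-q*b0) / (1 - exp(-q/2))
       = (2*N) powr \<beta> * (real b0+1) powr \<beta> * (2*c*exp(-q*b0)) * (1 / (1 - exp(-q/2)))" by simp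
    also have "\<dots> \<le> (2*N) powr \<beta> * (real b0+1) powr \<beta> * (2*c*(q/(6*c))) * (3/q)"
    proof (rule mult_mono)
      show "(2*N) powr \<beta> * (real b0+1) powr \<beta> * (2*c*exp(-q*b0)) \<le> (2*N) powr \<beta> * (real b0+1) powr \<beta> * (2*c*(q/(6*c)))"
        using e c K0 by (intro mult_left_mono) auto
      show "1 / (1 - exp(-q/2)) \<le> 3/q" by (rule geo_inv[OF q])
      show "0 \<le> (2*N) powr \<beta> * (real b0+1) powr \<beta> * (2*c*(q/(6*c)))" using K0 c q by simp
      have "exp(-q/2) < 1" using q by simp
      thus "0 \<le> 1 / (1 - exp(-q/2))" by simp
    qed
    also have "\<dots> = (2*N) powr \<beta> * (real b0+1) powr \<beta>" using q c by (simp add: field_simps)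
    finally show "2*c*(2*N) powr \<beta> * (real b0+1) powr \<beta> * exp(-q*b0) / (1 - exp(-q/2)) \<le> (2*N) powr \<beta> * (real b0+1) powr \<beta>" .
  qed
  finally have I: "(\<integral>\<^sup>+\<omega>. A_seq \<beta> (2*tt \<omega>) \<partial>M) \<le> ennreal C0 + ennreal ((2*N) powr \<beta> * (real b0+1) powr \<beta>)"
    by (simp add: add_left_mono)
  have X: "(2*N) powr \<beta> * (real b0+1) powr \<beta> = (2*N*(real b0+1)) powr \<beta>" by (simp add: powr_mult)
  have X1: "(2*N*(real b0+1)) powr \<beta> \<ge> 1"
  proof -
    have "1*1 \<le> (2*real N)*(real b0+1)" using N by (intro mult_mono) auto
    thus ?thesis using bet by (intro ge_one_powr_ge_zero) auto
  qed
  have X2: "real (2*(N*b0)) powr \<beta> \<le> (2*N*(real b0+1)) powr \<beta>"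
    using bet N by (intro powr_mono2) (auto intro: mult_left_mono)
  have "ennreal C0 + ennreal ((2*N) powr \<beta> * (real b0+1) powr \<beta>) = ennreal (C0 + (2*N*(real b0+1)) powr \<beta>)"
    unfolding C0_def X by (subst ennreal_plus) auto
  also have "\<dots> \<le> ennreal (3 * (2*N*(real b0+1)) powr \<beta>)"
    unfolding C0_def using X1 X2 by (intro ennreal_leI) linarith
  finally show ?thesis using I by simp
qed



lemma final_real:
  fixes \<beta> q c :: real and n b0 :: nat
  assumes bet: "\<beta> > 1" and q: "0 < q" "q \<le> 1" and n: "n \<ge> 2" and c: "c = real (n*(n-1))"
    and b0: "b0 = nat \<lceil>max (2*\<beta>/q) (ln (6*c/q)/q)\<rceil>"
  shows "3 * (2*real (n-1)*(real b0+1)) powr \<beta> \<le>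
    (2*exp 1) powr (2*\<beta>) * real n powr \<beta> * (((8*\<beta>/q) * ln (8*\<beta>*real n/q)) powr \<beta> + 1/(\<beta>-1))"
proof -
  define lL where "lL = ln (8*\<beta>*real n/q)"
  define h where "h = (8*\<beta>/q) * lL"
  have nn: "real n \<ge> 2" using n by simp
  have big: "8*\<beta>*real n/q \<ge> 16"
  proof -
    have "1*2 \<le> \<beta>*real n" using bet nn by (intro mult_mono) auto
    hence "8*\<beta>*real n \<ge> 16" by linarith
    moreover have "8*\<beta>*real n/q \<ge> 8*\<beta>*real n" using q bet nn by (simp add: le_divide_eq mult_le_cancel_left1)
    ultimately show ?thesis by linarith
  qed
  have l1: "lL \<ge> 1"
  proof -
    have "exp 1 \<le> 8*\<beta>*real n/q" using big exp_le by linarith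
    hence "ln (exp 1) \<le> lL" unfolding lL_def by (subst ln_le_cancel_iff) (use big in auto)
    thus ?thesis by simp
  qed
  have cpos: "c > 0" using n c by simp
  have cle: "c \<le> real n ^ 2" unfolding c using n by (simp add: power2_eq_square)
  have a2: "ln (6*c/q)/q \<le> 2*lL/q"
  proof -
    have "6*c/q \<le> 6*real n^2/q" using cle q by (simp add: divide_right_mono)
    also have "\<dots> \<le> (8*\<beta>*real n/q)^2"
    proof -
      have "\<beta>^2 \<ge> 1" using bet by (simp add: one_le_power)
      hence "6 * q \<le> 64*\<beta>^2" using q by linarith
      hence "(6 * q) * real n^2 \<le> (64*\<beta>^2) * real n^2" by (rule mult_right_mono) simp
      hence "6*real n^2 * q \<le> 64*\<beta>^2 * real n^2" by (simp add: algebra_simps)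
      thus ?thesis using q by (simp add: field_simps power2_eq_square)
    qed
    finally have "ln (6*c/q) \<le> ln ((8*\<beta>*real n/q)^2)" using cpos q big n by (subst ln_le_cancel_iff) auto
    also have "\<dots> = 2*lL" unfolding lL_def using big by (simp add: ln_realpow)
    finally show ?thesis using q by (simp add: divide_right_mono)
  qed
  have b0le: "real b0 \<le> max (2*\<beta>/q) (ln (6*c/q)/q) + 1"
  proof -
    have xpos: "max (2*\<beta>/q) (ln (6*c/q)/q) > 0" using bet q by (simp add: less_max_iff_disj)
    have "real b0 = real_of_int \<lceil>max (2*\<beta>/q) (ln (6*c/q)/q)\<rceil>" unfolding b0 using xpos by simp
    thus ?thesis using of_int_ceiling_le_add_one[of "max (2*\<beta>/q) (ln (6*c/q)/q)"] by linarith
  qed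
  have b0h: "real b0 + 1 \<le> 2*h"
  proof -
    have "real b0 + 1 \<le> 2*\<beta>/q + 2*lL/q + 2/q"
    proof -
      have "2/q \<ge> 2" using q by (simp add: le_divide_eq)
      moreover have "2*\<beta>/q \<ge> 0" "2*lL/q \<ge> 0" using bet q l1 by auto
      ultimately show ?thesis using b0le a2 by linarith
    qed
    also have "\<dots> = (2*\<beta> + 2*lL + 2)/q" by (simp add: add_divide_distrib)
    also have "\<dots> \<le> (16*\<beta>*lL)/q"
    proof (rule divide_right_mono)
      have "\<beta>*lL \<ge> \<beta>" "\<beta>*lL \<ge> lL" "\<beta>*lL \<ge> 1" using bet l1 by (smt (verit) mult_le_cancel_left1 mult_le_cancel_right1 one_le_mult_iff)+
      thus "2*\<beta> + 2*lL + 2 \<le> 16*\<beta>*lL" by linarith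
    qed (use q in auto)
    also have "\<dots> = 2*h" unfolding h_def by (simp add: field_simps)
    finally show ?thesis .
  qed
  have hpos: "h > 0" unfolding h_def using bet q l1 by auto
  have L1: "2*real (n-1)*(real b0+1) \<le> 4*real n*h"
  proof -
    have "2*real (n-1) \<le> 2*real n" by simp
    hence "2*real (n-1)*(real b0+1) \<le> (2*real n)*(2*h)" using b0h by (intro mult_mono) auto
    thus ?thesis by simp
  qed
  have "3 * (2*real (n-1)*(real b0+1)) powr \<beta> \<le> exp (2*\<beta>) * (4*real n*h) powr \<beta>"
  proof (rule mult_mono)
    have "exp 2 \<le> exp (2*\<beta>)" using bet by simp
    moreover have "3 \<le> exp (2::real)" using exp_ge_add_one_self[of 2] by simp
    ultimately show "3 \<le> exp (2*\<beta>)" by linarith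
    show "(2*real (n-1)*(real b0+1)) powr \<beta> \<le> (4*real n*h) powr \<beta>"
      using L1 bet by (intro powr_mono2) auto
  qed auto
  also have "exp (2*\<beta>) * (4*real n*h) powr \<beta> = (2*exp 1) powr (2*\<beta>) * real n powr \<beta> * h powr \<beta>"
  proof -
    have "(2*exp 1) powr (2*\<beta>) = exp (2*\<beta>) * 4 powr \<beta>"
    proof -
      have "(2*exp 1) powr (2*\<beta>) = ((2*exp 1) powr 2) powr \<beta>" by (simp only: powr_powr)
      also have "(2*exp (1::real)) powr 2 = 4 * exp 2"
      proof -
        have "(2*exp (1::real)) powr 2 = (2*exp 1)^2" by (rule powr_numeral) simp
        also have "\<dots> = 4 * (exp 1 * exp 1)" by (simp add: power2_eq_square)
        also have "exp 1 * exp 1 = exp (2::real)" by (simp add: exp_add[symmetric])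
        finally show ?thesis by simp
      qed
      also have "(4 * exp 2) powr \<beta> = 4 powr \<beta> * exp (2*\<beta>)"
        by (simp add: powr_mult powr_def ln_mult exp_add[symmetric] algebra_simps)
      finally show ?thesis by simp
    qed
    thus ?thesis using hpos by (simp add: powr_mult)
  qed
  also have "\<dots> \<le> (2*exp 1) powr (2*\<beta>) * real n powr \<beta> * (h powr \<beta> + 1/(\<beta>-1))"
    using bet by (intro mult_left_mono) auto
  finally show ?thesis unfolding h_def lL_def .
qed



theorem mainTheorem16:
  fixes n m istar :: nat and E :: "nat \<Rightarrow> nat \<Rightarrow> bool" and \<beta> :: real
  assumes "undirected_graph {1..n+m} E"
    and "hon_connected n E"
    and "istar \<in> {1..n}"
    and "\<beta> > 1"
  shows "(\<integral>\<^sup>+ \<omega>. A_seq \<beta> (2 * tau_spr n istar \<omega>) \<partial>noisy_space n m E)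
     \<le> ennreal ((2 * exp 1) powr (2 * \<beta>) * real n powr \<beta> *
         (((8 * \<beta> * real (dhon_max n E) / Upsilon n m E)
            * ln (8 * \<beta> * real (dhon_max n E) * real n / Upsilon n m E)) powr \<beta>
          + 1 / (\<beta> - 1)))"
proof (cases "n \<ge> 2")
  case False
  hence n1: "n = 1" using assms(3) by auto
  have "tau_spr n istar \<omega> = 0" for \<omega>
  proof -
    have "infected n istar \<omega> 0 = {1..n}" using n1 assms(3) by auto
    hence "\<exists>j. infected n istar \<omega> j = {1..n}" by blast
    thus ?thesis unfolding tau_spr_def using \<open>infected n istar \<omega> 0 = {1..n}\<close>
      by (simp add: Least_eq_0 zero_enat_def)
  qed
  hence "(\<integral>\<^sup>+ \<omega>. A_seq \<beta> (2 * tau_spr n istar \<omega>) \<partial>noisy_space n m E) = 0"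
  proof -
    have "2 * enat 0 = enat 0" by (simp add: zero_enat_def[symmetric])
    thus ?thesis using \<open>\<And>\<omega>. tau_spr n istar \<omega> = 0\<close> assms(4) by (simp add: A_seq_def zero_enat_def)
  qed
  thus ?thesis by simp
next
  case True
  interpret graphctx n m istar E using assms True by unfold_locales auto
  define c where "c = real (n*(n-1))"
  define b0 where "b0 = nat \<lceil>max (2*\<beta>/q) (ln (6*c/q)/q)\<rceil>"
  have "(\<integral>\<^sup>+ \<omega>. A_seq \<beta> (2 * tau_spr n istar \<omega>) \<partial>noisy_space n m E)
      \<le> ennreal (3 * (2*(n-1)*(real b0+1)) powr \<beta>)"
  proof (rule expect_bound[where S=S and c=c and q=q])
    show "prob_space (noisy_space n m E)" by (rule prob_noisy)
    show "S b \<in> sets (noisy_space n m E)" for b by (rule S_sets)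
    show "emeasure (noisy_space n m E) (S b) \<le> ennreal (c * (1 - q) ^ b)" for b
      unfolding c_def by (rule S_bound)
    show "tau_spr n istar \<omega> \<le> enat ((n-1) * b)" if "\<omega> \<notin> S b" for \<omega> b
      using S_good[OF that] .
  qed (use q_pos q_le1 assms(4) True in \<open>auto simp: c_def b0_def\<close>)
  also have "\<dots> \<le> ennreal ((2 * exp 1) powr (2 * \<beta>) * real n powr \<beta> *
         (((8 * \<beta> / q) * ln (8 * \<beta> * real n / q)) powr \<beta> + 1 / (\<beta> - 1)))"
  proof (rule ennreal_leI)
    have "3 * (2*real (n-1)*(real b0+1)) powr \<beta> \<le>
      (2*exp 1) powr (2*\<beta>) * real n powr \<beta> * (((8*\<beta>/q) * ln (8*\<beta>*real n/q)) powr \<beta> + 1/(\<beta>-1))"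
      by (rule final_real[OF assms(4) q_pos q_le1 True c_def b0_def])
    thus "3 * (2*(n-1)*(real b0+1)) powr \<beta> \<le>
      (2*exp 1) powr (2*\<beta>) * real n powr \<beta> * (((8*\<beta>/q) * ln (8*\<beta>*real n/q)) powr \<beta> + 1/(\<beta>-1))"
      using True by (simp add: of_nat_diff)
  qed
  also have "8 * \<beta> / q = 8 * \<beta> * real (dhon_max n E) / Upsilon n m E"
    unfolding q_def using ups_pos dmax_pos by (simp add: field_simps)
  also have "8 * \<beta> * real n / q = 8 * \<beta> * real (dhon_max n E) * real n / Upsilon n m E"
    unfolding q_def using ups_pos dmax_pos by (simp add: field_simps)
  finally show ?thesis .
qed

end
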